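(* Let $k \geq 3$ be an odd integer. There is a constant $c_k > 0$ depending only on $k$ such that for every integer $n > 1$ there exist a set $P$ of $n$ points in the Euclidean plane $\mathbb{R}^2$ and a set $\mathcal{L}$ of $n$ lines in $\mathbb{R}^2$ such that the incidence graph $G = (P \cup \mathcal{L}, I(P,\mathcal{L}))$ has girth at least $k+5$ and \[ |I(P,\mathcal{L})| \geq c_k\, n^{1+\frac{4}{k^2+6k-3}}. \]
   Context: For a finite set $P$ of points and a finite set $\mathcal{L}$ of lines in the plane, $I(P,\mathcal{L}) = \{(p,\ell) \in P \times \mathcal{L} : p \in \ell\}$ is the set of incidences. The incidence graph of $(P,\mathcal{L})$ is the bipartite graph with vertex classes $P$ and $\mathcal{L}$ whose edge set is $I(P,\mathcal{L})$, i.e. $p \in P$ is adjacent to $\ell \in \mathcal{L}$ iff $p \in \ell$. The girth of a graph is the length of its shortest cycle (infinite if the graph has no cycle); "girth at least $k+5$" means the graph contains no cycle of length less than $k+5$. *)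

theory Defs
  imports Complex_Main
begin

type_synonym point = "real \<times> real"

definition is_line :: "point set \<Rightarrow> bool" where
  "is_line l \<longleftrightarrow> (\<exists>a b c. (a, b) \<noteq> (0, 0) \<and> l = {(x, y). a * x + b * y = c})"

definition incidences :: "point set \<Rightarrow> point set set \<Rightarrow> (point \<times> point set) set" where
  "incidences P L = {(p, l). p \<in> P \<and> l \<in> L \<and> p \<in> l}"

text \<open>The incidence graph is bipartite, so every cycle alternates between points and
  lines.\<close>
definition incidence_cycle :: "point set \<Rightarrow> point set set \<Rightarrow> nat \<Rightarrow> bool" where
  "incidence_cycle P L m \<longleftrightarrow> (\<exists>j ps ls. m = 2 * j \<and> j \<ge> 2 \<and>
      inj_on ps {..<j} \<and> inj_on ls {..<j} \<and>
      (\<forall>i<j. ps i \<in> P \<and> ls i \<in> L \<and> ps i \<in> ls i \<and> ps ((i + 1) mod j) \<in> ls i))"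

definition girth_at_least :: "point set \<Rightarrow> point set set \<Rightarrow> nat \<Rightarrow> bool" where
  "girth_at_least P L g \<longleftrightarrow> (\<forall>m. incidence_cycle P L m \<longrightarrow> m \<ge> g)"

end

theory Submission
  imports Defs "HOL-Library.FuncSet"
begin

lemma binom_ineq:
  fixes b t N :: nat
  assumes "b \<le> t" "t \<le> N"
  shows "real ((N - b) choose (t - b)) \<le> real (N choose t) * (real t / real N) ^ b"
  using assms
proof (induction b arbitrary: N t)
  case 0
  then show ?case by simp
next
  case (Suc b)
  then obtain N' t' where N: "N = Suc N'" and t: "t = Suc t'" 
    by (metis Suc_le_D le_trans)
  have le: "b \<le> t'" "t' \<le> N'" using Suc.prems N t by auto
  have eq: "(N - Suc b) choose (t - Suc b) = (N' - b) choose (t' - b)" using N t by simp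
  have IH: "real ((N' - b) choose (t' - b)) \<le> real (N' choose t') * (real t' / real N') ^ b"
    using Suc.IH le by blast
  have q: "real t' / real N' \<le> real t / real N"
  proof (cases "N' = 0")
    case True then show ?thesis by (simp add: N)
  next
    case False
    then have "real t' * real N \<le> real t * real N'" using le N t by (simp add: algebra_simps)
    then show ?thesis using False N by (simp add: divide_simps)
  qed
  have pw: "(real t' / real N') ^ b \<le> (real t / real N) ^ b"
    by (rule power_mono[OF q]) simp
  have bin: "real N * real (N' choose t') = real (N choose t) * real t"
    using Suc_times_binomial_eq[of N' t'] N t by (metis of_nat_mult)
  have "real ((N' - b) choose (t' - b)) \<le> real (N' choose t') * (real t / real N) ^ b"
    using IH pw by (meson mult_left_mono of_nat_0_le_iff order_trans)
  also have "real (N' choose t') = real (N choose t) * (real t / real N)"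
    using bin N by (simp add: field_simps)
  finally show ?case using eq by (simp add: algebra_simps)
qed

lemma count_super:
  assumes "finite U" "B \<subseteq> U"
  shows "real (card {T. T \<subseteq> U \<and> card T = t \<and> B \<subseteq> T}) \<le> real (card U choose t) * (real t / real (card U)) ^ card B"
proof (cases "card B \<le> t")
  case False
  have "{T. T \<subseteq> U \<and> card T = t \<and> B \<subseteq> T} = {}"
  proof (safe)
    fix T assume "T \<subseteq> U" "B \<subseteq> T" "t = card T"
    then have "card B \<le> card T" using assms by (meson card_mono finite_subset)
    then show "T \<in> {}" using False \<open>t = card T\<close> by simp
  qed
  then have "card {T. T \<subseteq> U \<and> card T = t \<and> B \<subseteq> T} = 0" by (metis card.empty)
  then show ?thesis by simp
next
  case True
  show ?thesis
  proof (cases "t \<le> card U")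
    case False
    have "{T. T \<subseteq> U \<and> card T = t \<and> B \<subseteq> T} = {}"
      using False assms(1) card_mono by fastforce
    then have "card {T. T \<subseteq> U \<and> card T = t \<and> B \<subseteq> T} = 0" by (metis card.empty)
    then show ?thesis by simp
  next
    case tle: True
    have sub: "{T. T \<subseteq> U \<and> card T = t \<and> B \<subseteq> T} \<subseteq> (\<lambda>S. S \<union> B) ` {S. S \<subseteq> U - B \<and> card S = t - card B}"
    proof
      fix T assume "T \<in> {T. T \<subseteq> U \<and> card T = t \<and> B \<subseteq> T}"
      then have T: "T \<subseteq> U" "card T = t" "B \<subseteq> T" by auto
      have "finite T" using T assms finite_subset by blast
      then have "card (T - B) = t - card B" using T card_Diff_subset[of B T] finite_subset by auto
      moreover have "T = (T - B) \<union> B" using T by auto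
      ultimately show "T \<in> (\<lambda>S. S \<union> B) ` {S. S \<subseteq> U - B \<and> card S = t - card B}"
        using T by blast
    qed
    have "card {T. T \<subseteq> U \<and> card T = t \<and> B \<subseteq> T} \<le> card ((\<lambda>S. S \<union> B) ` {S. S \<subseteq> U - B \<and> card S = t - card B})"
      by (rule card_mono[OF _ sub]) (use assms in auto)
    also have "\<dots> \<le> card {S. S \<subseteq> U - B \<and> card S = t - card B}" by (rule card_image_le) (use assms in auto)
    also have "\<dots> = (card U - card B) choose (t - card B)"
      using n_subsets[of "U - B" "t - card B"] assms by (simp add: card_Diff_subset finite_subset)
    finally have "real (card {T. T \<subseteq> U \<and> card T = t \<and> B \<subseteq> T}) \<le> real ((card U - card B) choose (t - card B))"
      by linarith
    also have "\<dots> \<le> real (card U choose t) * (real t / real (card U)) ^ card B"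
      by (rule binom_ineq) (use True tle in auto)
    finally show ?thesis .
  qed
qed

lemma deletion:
  fixes U :: "'a set" and F :: "'a set set" and t :: nat
  assumes U: "finite U" and tle: "t \<le> card U" and FU: "F \<subseteq> Pow U" and Fne: "\<forall>B\<in>F. B \<noteq> {}"
  shows "\<exists>T\<subseteq>U. card T \<le> t \<and> real t - (\<Sum>B\<in>F. (real t / real (card U)) ^ card B) \<le> real (card T)
          \<and> (\<forall>B\<in>F. \<not> B \<subseteq> T)"
proof -
  define N where "N = card U"
  define q where "q = real t / real N"
  define W where "W = (\<Sum>B\<in>F. q ^ card B)"
  define Ts where "Ts = {T. T \<subseteq> U \<and> card T = t}"
  define cnt where "cnt T = card {B\<in>F. B \<subseteq> T}" for T
  have finF: "finite F" using FU U by (meson finite_Pow_iff finite_subset)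
  have finTs: "finite Ts" unfolding Ts_def using U by simp
  have cardTs: "card Ts = N choose t" unfolding Ts_def N_def using n_subsets[OF U] by simp
  have Tspos: "card Ts > 0" using cardTs tle N_def by simp
  have "(\<Sum>T\<in>Ts. real (cnt T)) = (\<Sum>T\<in>Ts. \<Sum>B\<in>F. (if B \<subseteq> T then 1 else 0))"
    unfolding cnt_def using finF by (simp add: sum.If_cases Int_def)
  also have "\<dots> = (\<Sum>B\<in>F. \<Sum>T\<in>Ts. (if B \<subseteq> T then 1 else 0))" by (rule sum.swap)
  also have "\<dots> = (\<Sum>B\<in>F. real (card {T. T \<subseteq> U \<and> card T = t \<and> B \<subseteq> T}))"
  proof (rule sum.cong[OF refl])
    fix B assume "B \<in> F"
    have "{T\<in>Ts. B \<subseteq> T} = {T. T \<subseteq> U \<and> card T = t \<and> B \<subseteq> T}" unfolding Ts_def by auto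
    then show "(\<Sum>T\<in>Ts. (if B \<subseteq> T then 1 else 0)) = real (card {T. T \<subseteq> U \<and> card T = t \<and> B \<subseteq> T})"
      using finTs by (simp add: sum.If_cases Int_def)
  qed
  also have "\<dots> \<le> (\<Sum>B\<in>F. real (N choose t) * q ^ card B)"
    by (rule sum_mono) (use count_super[OF U] FU in \<open>auto simp: N_def q_def\<close>)
  also have "\<dots> = real (card Ts) * W" unfolding W_def cardTs by (simp add: sum_distrib_left)
  finally have sumle: "(\<Sum>T\<in>Ts. real (cnt T)) \<le> real (card Ts) * W" .
  have "\<exists>T\<in>Ts. real (cnt T) \<le> W"
  proof (rule ccontr)
    assume "\<not> ?thesis"
    then have "\<forall>T\<in>Ts. W < real (cnt T)" by auto
    then have "(\<Sum>T\<in>Ts. W) < (\<Sum>T\<in>Ts. real (cnt T))"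
      using Tspos finTs by (intro sum_strict_mono) auto
    then show False using sumle by simp
  qed
  then obtain T where T: "T \<in> Ts" "real (cnt T) \<le> W" by blast
  define G where "G = {B\<in>F. B \<subseteq> T}"
  define T' where "T' = T - (\<lambda>B. SOME x. x \<in> B) ` G"
  have finT: "finite T" using T U unfolding Ts_def by (auto intro: finite_subset)
  have "T \<subseteq> T' \<union> (\<lambda>B. SOME x. x \<in> B) ` G" unfolding T'_def by auto
  then have "card T \<le> card (T' \<union> (\<lambda>B. SOME x. x \<in> B) ` G)"
    using finT finF unfolding G_def T'_def by (intro card_mono) auto
  also have "\<dots> \<le> card T' + card ((\<lambda>B. SOME x. x \<in> B) ` G)" by (rule card_Un_le)
  also have "card ((\<lambda>B. SOME x. x \<in> B) ` G) \<le> card G" using finF unfolding G_def by (intro card_image_le) auto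
  finally have c1: "card T \<le> card T' + cnt T" unfolding G_def cnt_def by simp
  have c2: "card T' \<le> card T" unfolding T'_def using finT by (intro card_mono) auto
  have avoid: "\<forall>B\<in>F. \<not> B \<subseteq> T'"
  proof (intro ballI notI)
    fix B assume B: "B \<in> F" "B \<subseteq> T'"
    then have "B \<subseteq> T" unfolding T'_def by auto
    then have "B \<in> G" using B unfolding G_def by auto
    have "(SOME x. x \<in> B) \<in> B" using Fne B by (meson ex_in_conv someI_ex)
    moreover have "(SOME x. x \<in> B) \<notin> T'" using \<open>B \<in> G\<close> unfolding T'_def by auto
    ultimately show False using B by auto
  qed
  have "card T = t" "T \<subseteq> U" using T unfolding Ts_def by auto
  moreover have "T' \<subseteq> U" using \<open>T \<subseteq> U\<close> unfolding T'_def by auto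
  ultimately show ?thesis using c1 c2 avoid T(2)
    unfolding W_def q_def N_def by (intro exI[of _ T']) auto
qed

definition lin :: "real \<Rightarrow> real \<Rightarrow> point set" where
  "lin a b = {p. snd p = a * fst p + b}"

definition Gr :: "nat \<Rightarrow> nat \<Rightarrow> point set" where
  "Gr m Y = (\<lambda>(x,y). (real x, real y)) ` ({..<m} \<times> {..<Y})"

definition Sl :: "nat \<Rightarrow> real set" where "Sl R = real ` {1..R}"
definition Bs :: "nat \<Rightarrow> real set" where "Bs M = real ` {..<M}"
definition Xs :: "nat \<Rightarrow> real set" where "Xs m = real ` {..<m}"

lemma card_Sl: "card (Sl R) = R" unfolding Sl_def by (simp add: card_image)
lemma card_Bs: "card (Bs M) = M" unfolding Bs_def by (simp add: card_image)
lemma card_Xs: "card (Xs m) = m" unfolding Xs_def by (simp add: card_image)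
lemma fin_Sl: "finite (Sl R)" unfolding Sl_def by simp
lemma fin_Bs: "finite (Bs M)" unfolding Bs_def by simp
lemma fin_Xs: "finite (Xs m)" unfolding Xs_def by simp

lemma card_Gr: "card (Gr m Y) = m * Y"
proof -
  have "inj_on (\<lambda>(x::nat,y::nat). (real x, real y)) ({..<m} \<times> {..<Y})" by (auto simp: inj_on_def)
  then show ?thesis unfolding Gr_def by (simp add: card_image card_cartesian_product)
qed

lemma fin_Gr: "finite (Gr m Y)" unfolding Gr_def by simp

lemma is_line_lin: "is_line (lin a b)"
  unfolding is_line_def lin_def
  by (rule exI[of _ a], rule exI[of _ "-1"], rule exI[of _ "-b"]) auto

lemma lin_inj: assumes "lin a b = lin a' b'" shows "a = a' \<and> b = b'"
proof -
  have "(0, b) \<in> lin a b" "(1, a + b) \<in> lin a b" unfolding lin_def by auto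
  then have "(0, b) \<in> lin a' b'" "(1, a + b) \<in> lin a' b'" using assms by auto
  then show ?thesis unfolding lin_def by auto
qed

lemma same_x: "p \<in> lin a b \<Longrightarrow> q \<in> lin a b \<Longrightarrow> fst p = fst q \<Longrightarrow> p = q"
  unfolding lin_def by (cases p, cases q) auto

definition CP :: "nat \<Rightarrow> nat \<Rightarrow> nat \<Rightarrow> nat \<Rightarrow> ((nat\<Rightarrow>real) \<times> (nat\<Rightarrow>real) \<times> (nat\<Rightarrow>real)) set" where
  "CP m R M j = {(x,a,b). x \<in> PiE {..<j} (\<lambda>_. Xs m) \<and> a \<in> PiE {..<j} (\<lambda>_. Sl R) \<and> b \<in> PiE {..<j} (\<lambda>_. Bs M)
     \<and> inj_on (\<lambda>i. (a i, b i)) {..<j}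
     \<and> (\<forall>i<j. x i \<noteq> x ((i + 1) mod j) \<and>
          a i * x ((i + 1) mod j) + b i = a ((i + 1) mod j) * x ((i + 1) mod j) + b ((i + 1) mod j))}"

lemma CP_inj:
  assumes j: "j \<ge> 2" and A: "(x,a,b) \<in> CP m R M j" and A': "(x,a',b') \<in> CP m R M j"
    and aa: "\<forall>i\<in>{1..<j}. a i = a' i" and bb: "b 0 = b' 0"
  shows "a = a' \<and> b = b'"
proof -
  define D where "D = a 0 - a' 0"
  have PA: "\<forall>i<j. x i \<noteq> x ((i + 1) mod j) \<and>
          a i * x ((i + 1) mod j) + b i = a ((i + 1) mod j) * x ((i + 1) mod j) + b ((i + 1) mod j)"
    using A unfolding CP_def by simp
  have PA': "\<forall>i<j. x i \<noteq> x ((i + 1) mod j) \<and>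
          a' i * x ((i + 1) mod j) + b' i = a' ((i + 1) mod j) * x ((i + 1) mod j) + b' ((i + 1) mod j)"
    using A' unfolding CP_def by simp
  have ch: "\<And>i. i < j \<Longrightarrow> a i * x ((i + 1) mod j) + b i = a ((i + 1) mod j) * x ((i + 1) mod j) + b ((i + 1) mod j)"
    using PA by blast
  have ch': "\<And>i. i < j \<Longrightarrow> a' i * x ((i + 1) mod j) + b' i = a' ((i + 1) mod j) * x ((i + 1) mod j) + b' ((i + 1) mod j)"
    using PA' by blast
  have x01: "x 0 \<noteq> x 1" using spec[OF PA, of 0] j by simp
  have step: "b i - b' i = D * x 1" if "1 \<le> i" "i < j" for i
    using that
  proof (induction i)
    case 0 then show ?case by simp
  next
    case (Suc i)
    show ?case
    proof (cases "i = 0")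
      case True
      have "1 mod j = 1" using j by simp
      then have "a 0 * x 1 + b 0 = a 1 * x 1 + b 1" "a' 0 * x 1 + b' 0 = a' 1 * x 1 + b' 1"
        using ch[of 0] ch'[of 0] j by auto
      moreover have "a 1 = a' 1" using aa j by auto
      ultimately show ?thesis using True bb unfolding D_def by (simp add: algebra_simps)
    next
      case False
      have m: "(i + 1) mod j = Suc i" using Suc.prems by simp
      have "a i * x (Suc i) + b i = a (Suc i) * x (Suc i) + b (Suc i)"
           "a' i * x (Suc i) + b' i = a' (Suc i) * x (Suc i) + b' (Suc i)"
        using ch[of i] ch'[of i] Suc.prems m by auto
      moreover have "a i = a' i" "a (Suc i) = a' (Suc i)" using aa Suc.prems False by auto
      moreover have "b i - b' i = D * x 1" using Suc.IH Suc.prems False by auto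
      ultimately show ?thesis by (simp add: algebra_simps)
    qed
  qed
  have last: "(j - 1 + 1) mod j = 0" using j by simp
  have "a (j-1) * x 0 + b (j-1) = a 0 * x 0 + b 0" "a' (j-1) * x 0 + b' (j-1) = a' 0 * x 0 + b' 0"
    using ch[of "j-1"] ch'[of "j-1"] j last by auto
  moreover have "a (j-1) = a' (j-1)" using aa j by auto
  moreover have "b (j-1) - b' (j-1) = D * x 1" using step[of "j-1"] j by auto
  ultimately have "D * x 1 = D * x 0" using bb unfolding D_def by (simp add: algebra_simps)
  then have D0: "D = 0" using x01 by simp
  have ai: "a i = a' i" for i
  proof (cases "i < j")
    case True then show ?thesis using aa D0 unfolding D_def by (cases "i = 0") auto
  next
    case False then show ?thesis using A A' unfolding CP_def PiE_def extensional_def by auto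
  qed
  have bi: "b i = b' i" for i
  proof (cases "i < j")
    case True then show ?thesis using step[of i] bb D0 by (cases "i = 0") auto
  next
    case False then show ?thesis using A A' unfolding CP_def PiE_def extensional_def by auto
  qed
  show ?thesis using ai bi by auto
qed

lemma card_CP:
  assumes j: "j \<ge> 2"
  shows "card (CP m R M j) \<le> m ^ j * R ^ (j - 1) * M"
proof -
  define f where "f = (\<lambda>(x::nat\<Rightarrow>real, a::nat\<Rightarrow>real, b::nat\<Rightarrow>real). (x, restrict a {1..<j}, b 0))"
  define Tg where "Tg = PiE {..<j} (\<lambda>_. Xs m) \<times> PiE {1..<j} (\<lambda>_. Sl R) \<times> Bs M"
  have inj: "inj_on f (CP m R M j)"
  proof (rule inj_onI)
    fix u v assume u: "u \<in> CP m R M j" and v: "v \<in> CP m R M j" and e: "f u = f v"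
    obtain x a b where U: "u = (x,a,b)" by (cases u) auto
    obtain x' a' b' where V: "v = (x',a',b')" by (cases v) auto
    have "x = x'" "restrict a {1..<j} = restrict a' {1..<j}" "b 0 = b' 0" using e U V unfolding f_def by auto
    then have "\<forall>i\<in>{1..<j}. a i = a' i" by (metis restrict_apply')
    then show "u = v" using CP_inj[OF j, of x a b m R M a' b'] u v U V \<open>x = x'\<close> \<open>b 0 = b' 0\<close> by auto
  qed
  have sub: "f ` CP m R M j \<subseteq> Tg"
  proof
    fix w assume "w \<in> f ` CP m R M j"
    then obtain x a b where w: "w = f (x,a,b)" "(x,a,b) \<in> CP m R M j" by auto
    then have "x \<in> PiE {..<j} (\<lambda>_. Xs m)" "a \<in> PiE {..<j} (\<lambda>_. Sl R)" "b \<in> PiE {..<j} (\<lambda>_. Bs M)"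
      unfolding CP_def by auto
    moreover have "restrict a {1..<j} \<in> PiE {1..<j} (\<lambda>_. Sl R)" using calculation(2) 
      by (simp add: restrict_PiE_iff PiE_iff)
    moreover have "b 0 \<in> Bs M" using calculation(3) j by (simp add: PiE_iff)
    ultimately show "w \<in> Tg" unfolding Tg_def w f_def by simp
  qed
  have finTg: "finite Tg" unfolding Tg_def by (simp add: finite_PiE fin_Xs fin_Sl fin_Bs)
  have "card (CP m R M j) \<le> card Tg" by (rule card_inj_on_le[OF inj sub finTg])
  also have "card Tg = m ^ j * R ^ (j - 1) * M"
    unfolding Tg_def by (simp add: card_cartesian_product card_PiE card_Xs card_Sl card_Bs)
  finally show ?thesis .
qed

lemma fin_CP: "finite (CP m R M j)"
proof -
  have "CP m R M j \<subseteq> PiE {..<j} (\<lambda>_. Xs m) \<times> PiE {..<j} (\<lambda>_. Sl R) \<times> PiE {..<j} (\<lambda>_. Bs M)"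
    unfolding CP_def by auto
  then show ?thesis by (rule finite_subset) (simp add: finite_PiE fin_Xs fin_Sl fin_Bs)
qed

abbreviation lin2 :: "real \<times> real \<Rightarrow> point set" where "lin2 \<equiv> (\<lambda>(a,b). lin a b)"

lemma cycle_params:
  assumes T: "T \<subseteq> Sl R \<times> Bs M" and j: "j \<ge> 2"
    and ips: "inj_on ps {..<j}" and ils: "inj_on ls {..<j}"
    and c: "\<forall>i<j. ps i \<in> Gr m Y \<and> ls i \<in> lin2 ` T \<and> ps i \<in> ls i \<and> ps ((i + 1) mod j) \<in> ls i"
  shows "\<exists>x a b. (x,a,b) \<in> CP m R M j \<and> (\<lambda>i. (a i, b i)) ` {..<j} \<subseteq> T"
proof -
  define th where "th i = (SOME th. th \<in> T \<and> ls i = lin (fst th) (snd th))" for i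
  have th: "th i \<in> T \<and> ls i = lin (fst (th i)) (snd (th i))" if "i < j" for i
  proof -
    have "\<exists>th. th \<in> T \<and> ls i = lin (fst th) (snd th)" using c that by fastforce
    then show ?thesis unfolding th_def by (rule someI_ex)
  qed
  define x where "x = restrict (\<lambda>i. fst (ps i)) {..<j}"
  define a where "a = restrict (\<lambda>i. fst (th i)) {..<j}"
  define b where "b = restrict (\<lambda>i. snd (th i)) {..<j}"
  have ab: "(a i, b i) = th i" if "i < j" for i using that unfolding a_def b_def by simp
  have lsab: "ls i = lin (a i) (b i)" if "i < j" for i using th[OF that] that unfolding a_def b_def by simp
  have xin: "x \<in> PiE {..<j} (\<lambda>_. Xs m)"
  proof -
    have "fst (ps i) \<in> Xs m" if "i < j" for i
      using c that unfolding Gr_def Xs_def by auto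
    then show ?thesis unfolding x_def by (simp add: restrict_PiE_iff)
  qed
  have ain: "a \<in> PiE {..<j} (\<lambda>_. Sl R)"
  proof -
    have "fst (th i) \<in> Sl R" if "i < j" for i using th[OF that] T by auto
    then show ?thesis unfolding a_def by (simp add: restrict_PiE_iff)
  qed
  have bin: "b \<in> PiE {..<j} (\<lambda>_. Bs M)"
  proof -
    have "snd (th i) \<in> Bs M" if "i < j" for i using th[OF that] T by auto
    then show ?thesis unfolding b_def by (simp add: restrict_PiE_iff)
  qed
  have inj: "inj_on (\<lambda>i. (a i, b i)) {..<j}"
  proof (rule inj_onI)
    fix i i' assume "i \<in> {..<j}" "i' \<in> {..<j}" "(a i, b i) = (a i', b i')"
    then have "ls i = ls i'" using lsab by auto
    then show "i = i'" using ils \<open>i \<in> {..<j}\<close> \<open>i' \<in> {..<j}\<close> by (meson inj_onD)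
  qed
  have chain: "x i \<noteq> x ((i + 1) mod j) \<and>
          a i * x ((i + 1) mod j) + b i = a ((i + 1) mod j) * x ((i + 1) mod j) + b ((i + 1) mod j)"
    if i: "i < j" for i
  proof -
    define i' where "i' = (i + 1) mod j"
    have i': "i' < j" using j unfolding i'_def by simp
    have ne: "i \<noteq> i'"
    proof
      assume "i = i'"
      then show False
      proof (cases "i + 1 < j")
        case True then show False using \<open>i = i'\<close> unfolding i'_def by simp
      next
        case False then have "i + 1 = j" using i by simp
        then show False using \<open>i = i'\<close> j unfolding i'_def by simp
      qed
    qed
    have p1: "ps i' \<in> lin (a i) (b i)" "ps i \<in> lin (a i) (b i)" "ps i' \<in> lin (a i') (b i')"
      using c i i' lsab unfolding i'_def by auto
    have xi: "x i = fst (ps i)" "x i' = fst (ps i')" using i i' unfolding x_def by auto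
    have "ps i \<noteq> ps i'" using ips ne i i' by (meson inj_onD lessThan_iff)
    then have "x i \<noteq> x i'" using same_x[OF p1(2) p1(1)] xi by auto
    moreover have "snd (ps i') = a i * x i' + b i" "snd (ps i') = a i' * x i' + b i'"
      using p1 xi unfolding lin_def by auto
    ultimately show ?thesis unfolding i'_def by simp
  qed
  have "(x,a,b) \<in> CP m R M j" unfolding CP_def using xin ain bin inj chain by simp
  moreover have "(\<lambda>i. (a i, b i)) ` {..<j} \<subseteq> T" using ab th by auto
  ultimately show ?thesis by blast
qed

lemma inc_lb:
  assumes T: "T \<subseteq> Sl R \<times> Bs M" and Y: "M + R * m \<le> Y"
  shows "m * card T \<le> card (incidences (Gr m Y) (lin2 ` T))"
proof -
  define f where "f = (\<lambda>((a::real,b::real), x::nat). ((real x, a * real x + b), lin a b))"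
  have finT: "finite T" using T by (rule finite_subset) (simp add: fin_Sl fin_Bs)
  have inj: "inj_on f (T \<times> {..<m})"
  proof (rule inj_onI)
    fix u v assume "u \<in> T \<times> {..<m}" "v \<in> T \<times> {..<m}" "f u = f v"
    then obtain a b x a' b' x' where u: "u = ((a,b),x)" and v: "v = ((a',b'),x')"
      by (metis prod.collapse)
    have "lin a b = lin a' b'" "real x = real x'" using \<open>f u = f v\<close> u v unfolding f_def by auto
    then show "u = v" using lin_inj u v by auto
  qed
  have sub: "f ` (T \<times> {..<m}) \<subseteq> incidences (Gr m Y) (lin2 ` T)"
  proof
    fix w assume "w \<in> f ` (T \<times> {..<m})"
    then obtain a b x where w: "w = f ((a,b),x)" and ab: "(a,b) \<in> T" and x: "x < m" by auto
    obtain \<alpha> \<beta> where al: "a = real \<alpha>" "\<alpha> \<in> {1..R}" and be: "b = real \<beta>" "\<beta> < M"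
      using ab T unfolding Sl_def Bs_def by blast
    have "\<alpha> * x \<le> R * m" using al x by (intro mult_mono) auto
    then have lt: "\<alpha> * x + \<beta> < Y" using be Y by linarith
    have "(real x, a * real x + b) = (\<lambda>(x,y). (real x, real y)) (x, \<alpha> * x + \<beta>)"
      using al be by simp
    then have "(real x, a * real x + b) \<in> Gr m Y" unfolding Gr_def using x lt by blast
    moreover have "lin a b \<in> lin2 ` T" using ab by force
    moreover have "(real x, a * real x + b) \<in> lin a b" unfolding lin_def by simp
    ultimately show "w \<in> incidences (Gr m Y) (lin2 ` T)" unfolding w f_def incidences_def by simp
  qed
  have fin: "finite (incidences (Gr m Y) (lin2 ` T))"
  proof -
    have "incidences (Gr m Y) (lin2 ` T) \<subseteq> Gr m Y \<times> lin2 ` T" unfolding incidences_def by auto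
    then show ?thesis by (rule finite_subset) (simp add: fin_Gr finT)
  qed
  have "card (T \<times> {..<m}) \<le> card (incidences (Gr m Y) (lin2 ` T))"
    by (rule card_inj_on_le[OF inj sub fin])
  then show ?thesis by (simp add: card_cartesian_product finT mult.commute)
qed

definition Good :: "nat \<Rightarrow> nat \<Rightarrow> real \<Rightarrow> bool" where
  "Good g n I \<longleftrightarrow> (\<exists>P L. card P = n \<and> card L = n \<and> (\<forall>l\<in>L. is_line l) \<and>
              girth_at_least P L g \<and> real (card (incidences P L)) \<ge> I)"

lemma padding:
  assumes finP: "finite P" and finL: "finite L" and cP: "card P \<le> n" and cL: "card L \<le> n"
    and H1: "\<forall>p\<in>P. snd p < Y0"
    and H2: "\<forall>l\<in>L. \<forall>p\<in>l. fst p < 0 \<longrightarrow> snd p < Y0"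
    and H3: "\<forall>l\<in>L. \<exists>p\<in>l. snd p < Y0"
    and lines: "\<forall>l\<in>L. is_line l"
    and gi: "girth_at_least P L g"
    and I: "real (card (incidences P L)) \<ge> I"
  shows "Good g n I"
proof -
  define Q where "Q = (\<lambda>i::nat. (- real i - 1, Y0)) ` {..< n - card P}"
  define H where "H = (\<lambda>i::nat. {p::point. snd p = Y0 + 1 + real i}) ` {..< n - card L}"
  have cQ: "card Q = n - card P" unfolding Q_def by (subst card_image) (auto simp: inj_on_def)
  have injH: "inj_on (\<lambda>i::nat. {p::point. snd p = Y0 + 1 + real i}) {..< n - card L}"
  proof (rule inj_onI)
    fix i i' assume eq: "{p::point. snd p = Y0 + 1 + real i} = {p. snd p = Y0 + 1 + real i'}"
    have "(0, Y0 + 1 + real i) \<in> {p::point. snd p = Y0 + 1 + real i}" by simp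
    then have "(0, Y0 + 1 + real i) \<in> {p::point. snd p = Y0 + 1 + real i'}" by (simp only: eq)
    then show "i = i'" by simp
  qed
  have cH: "card H = n - card L" unfolding H_def using injH by (simp add: card_image)
  have finQ: "finite Q" "finite H" unfolding Q_def H_def by auto
  have dPQ: "P \<inter> Q = {}" using H1 unfolding Q_def by auto
  have dLH: "L \<inter> H = {}"
  proof (rule ccontr)
    assume "L \<inter> H \<noteq> {}"
    then obtain l where l: "l \<in> L" "l \<in> H" by blast
    then obtain p where "p \<in> l" "snd p < Y0" using H3 by blast
    then show False using l(2) unfolding H_def by auto
  qed
  have c1: "card (P \<union> Q) = n" using card_Un_disjoint[OF finP finQ(1) dPQ] cQ cP by simp
  have c2: "card (L \<union> H) = n" using card_Un_disjoint[OF finL finQ(2) dLH] cH cL by simp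
  have lines': "\<forall>l\<in>L \<union> H. is_line l"
  proof
    fix l assume "l \<in> L \<union> H"
    then show "is_line l"
    proof
      assume "l \<in> L" then show ?thesis using lines by blast
    next
      assume "l \<in> H"
      then obtain i where l: "l = {p::point. snd p = Y0 + 1 + real i}" unfolding H_def by blast
      show ?thesis unfolding is_line_def l
        by (rule exI[of _ 0], rule exI[of _ 1], rule exI[of _ "Y0 + 1 + real i"]) auto
    qed
  qed
  have gi': "girth_at_least (P \<union> Q) (L \<union> H) g"
    unfolding girth_at_least_def
  proof (intro allI impI)
    fix mm assume "incidence_cycle (P \<union> Q) (L \<union> H) mm"
    then obtain j ps ls where cy: "mm = 2 * j" "j \<ge> 2" "inj_on ps {..<j}" "inj_on ls {..<j}"
      "\<forall>i<j. ps i \<in> P \<union> Q \<and> ls i \<in> L \<union> H \<and> ps i \<in> ls i \<and> ps ((i + 1) mod j) \<in> ls i"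
      unfolding incidence_cycle_def by blast
    have inPL: "ps i \<in> P \<and> ls i \<in> L" if "i < j" for i
    proof -
      have a: "ps i \<in> P \<union> Q" "ls i \<in> L \<union> H" "ps i \<in> ls i" using cy(5) that by auto
      have sle: "snd (ps i) \<le> Y0" using a(1) H1 unfolding Q_def by force
      have "ls i \<notin> H"
      proof
        assume "ls i \<in> H"
        then obtain k where "ls i = {p::point. snd p = Y0 + 1 + real k}" unfolding H_def by blast
        then show False using a(3) sle by auto
      qed
      then have lL: "ls i \<in> L" using a by auto
      have "ps i \<notin> Q"
      proof
        assume "ps i \<in> Q"
        then obtain k where k: "ps i = (- real k - 1, Y0)" unfolding Q_def by blast
        have "fst (ps i) < 0" using k by simp
        then have "snd (ps i) < Y0" using H2 lL a(3) by blast
        then show False using k by simp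
      qed
      then show ?thesis using a lL by auto
    qed
    have "incidence_cycle P L mm" unfolding incidence_cycle_def
      using cy inPL by (intro exI[of _ j] exI[of _ ps] exI[of _ ls]) auto
    then show "mm \<ge> g" using gi unfolding girth_at_least_def by blast
  qed
  have "incidences P L \<subseteq> incidences (P \<union> Q) (L \<union> H)" unfolding incidences_def by auto
  moreover have "finite (incidences (P \<union> Q) (L \<union> H))"
  proof -
    have "incidences (P \<union> Q) (L \<union> H) \<subseteq> (P \<union> Q) \<times> (L \<union> H)" unfolding incidences_def by auto
    then show ?thesis by (rule finite_subset) (use finP finL finQ in auto)
  qed
  ultimately have "card (incidences P L) \<le> card (incidences (P \<union> Q) (L \<union> H))" by (rule card_mono[rotated])
  then have "real (card (incidences (P \<union> Q) (L \<union> H))) \<ge> I" using I by linarith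
  then show ?thesis unfolding Good_def using c1 c2 lines' gi' by (intro exI[of _ "P \<union> Q"] exI[of _ "L \<union> H"]) simp
qed

lemma Good_mono: assumes "Good g n I" "I' \<le> I" shows "Good g n I'"
proof -
  obtain P L where "card P = n \<and> card L = n \<and> (\<forall>l\<in>L. is_line l) \<and>
              girth_at_least P L g \<and> real (card (incidences P L)) \<ge> I" using assms(1) unfolding Good_def by blast
  then show ?thesis unfolding Good_def using assms(2) by (intro exI[of _ P] exI[of _ L]) auto
qed

lemma base: assumes "n \<ge> 1" shows "Good g n 1"
proof -
  have gi: "girth_at_least {(0,0)} {lin 1 0} g"
    unfolding girth_at_least_def incidence_cycle_def
  proof (intro allI impI)
    fix mm :: nat assume "\<exists>j ps ls. mm = 2 * j \<and> 2 \<le> j \<and> inj_on ps {..<j} \<and> inj_on ls {..<j} \<and>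
          (\<forall>i<j. ps i \<in> {(0, 0)} \<and> ls i \<in> {lin 1 0} \<and> ps i \<in> ls i \<and> ps ((i + 1) mod j) \<in> ls i)"
    then obtain j :: nat and ps :: "nat \<Rightarrow> point" where jj: "2 \<le> j" "inj_on ps {..<j}" "\<forall>i<j. ps i = (0,0)" by blast
    then have "ps 0 = ps 1" by auto
    moreover have "(0::nat) \<in> {..<j}" "(1::nat) \<in> {..<j}" using jj by auto
    ultimately have "(0::nat) = 1" using jj(2) by (meson inj_onD)
    then show "g \<le> mm" by simp
  qed
  have inc: "incidences {(0,0)} {lin 1 0} = {((0,0), lin 1 0)}" unfolding incidences_def lin_def by auto
  show ?thesis
  proof (rule padding[of "{(0,0)}" "{lin 1 0}" n 1])
    show "\<forall>l\<in>{lin 1 0}. \<exists>p\<in>l. snd p < 1" unfolding lin_def by (intro ballI bexI[of _ "(0,0)"]) auto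
    show "\<forall>l\<in>{lin 1 0}. \<forall>p\<in>l. fst p < 0 \<longrightarrow> snd p < 1" unfolding lin_def by auto
    show "1 \<le> real (card (incidences {(0, 0)} {lin 1 0}))" using inc by simp
  qed (use assms gi is_line_lin in auto)
qed

lemma final:
  fixes K E :: nat and c0 e :: real
  assumes K: "K \<ge> 1" and E: "E \<ge> 1" and c0: "c0 > 0" and e: "0 \<le> e" "e \<le> 1 / real E"
    and cons: "\<And>m n. m \<ge> 1 \<Longrightarrow> n \<ge> K * m ^ E \<Longrightarrow> Good g n (c0 * real m ^ (E + 1))"
  shows "\<exists>c>0. \<forall>n::nat. n > 1 \<longrightarrow> Good g n (c * real n powr (1 + e))"
proof -
  define C where "C = real K * 2 ^ E"
  have C1: "C \<ge> 1" unfolding C_def using K by (simp add: one_le_power mult_ge1_I) 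
  define c where "c = min (1 / real K ^ 2) (c0 / C ^ (E + 1))"
  have cpos: "c > 0" unfolding c_def using K c0 C1 by simp
  have e1: "e \<le> 1" using e E by (smt (verit) divide_le_eq_1 of_nat_1 of_nat_le_iff)
  have "Good g n (c * real n powr (1 + e))" if n: "n > 1" for n
  proof (cases "n < K")
    case True
    have "real n powr (1 + e) \<le> real n powr 2" using n e1 by (intro powr_mono) auto
    also have "\<dots> = real n ^ 2" using n by (simp add: powr_realpow)
    also have "\<dots> \<le> real K ^ 2" using True by (intro power_mono) auto
    finally have a: "real n powr (1 + e) \<le> real K ^ 2" .
    have "c * real n powr (1 + e) \<le> (1 / real K ^ 2) * real K ^ 2"
      using a cpos by (intro mult_mono) (auto simp: c_def)
    also have "\<dots> = 1" using K by simp
    finally show ?thesis using base[of n g] n Good_mono by auto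
  next
    case False
    have "\<exists>m. (1 \<le> m \<and> K * m ^ E \<le> n) \<and> (\<forall>y. (1 \<le> y \<and> K * y ^ E \<le> n) \<longrightarrow> y \<le> m)"
    proof -
      have p1: "1 \<le> (1::nat) \<and> K * 1 ^ E \<le> n" using False by simp
      have pb: "\<forall>y. 1 \<le> y \<and> K * y ^ E \<le> n \<longrightarrow> y \<le> n"
      proof (intro allI impI)
        fix y :: nat assume y: "1 \<le> y \<and> K * y ^ E \<le> n"
        have "y \<le> y ^ E" using y E by (metis One_nat_def le_less less_one self_le_power zero_less_iff_neq_zero linorder_not_le not_one_le_zero)
        also have "\<dots> \<le> K * y ^ E" using K by simp
        finally show "y \<le> n" using y by simp
      qed
      show ?thesis using Nat.ex_has_greatest_nat[where P="\<lambda>m. 1 \<le> m \<and> K * m ^ E \<le> n", OF p1 pb] by blast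
    qed
    then obtain m where m: "1 \<le> m" "K * m ^ E \<le> n" and mx: "\<And>y. 1 \<le> y \<and> K * y ^ E \<le> n \<Longrightarrow> y \<le> m" by blast
    have "\<not> (K * (m + 1) ^ E \<le> n)" using mx[of "m+1"] by auto
    then have nlt: "real n < real K * (real m + 1) ^ E" by (metis of_nat_1 of_nat_add of_nat_less_iff of_nat_mult of_nat_power not_le)
    have "real K * (real m + 1) ^ E \<le> real K * (2 * real m) ^ E" using m by (intro mult_left_mono power_mono) auto
    also have "\<dots> = C * real m ^ E" unfolding C_def by (simp add: power_mult_distrib)
    also have "\<dots> \<le> C ^ E * real m ^ E" using C1 E by (intro mult_right_mono) (auto simp: self_le_power)
    also have "\<dots> = (C * real m) ^ E" by (simp add: power_mult_distrib)
    finally have nlt2: "real n < (C * real m) ^ E" using nlt by linarith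
    define r where "r = real n powr (1 / real E)"
    have npos: "real n > 0" using n by simp
    have rE: "r ^ E = real n"
    proof -
      have "r ^ E = r powr real E" unfolding r_def using npos by (simp add: powr_realpow)
      also have "\<dots> = real n" unfolding r_def using E npos by (simp add: powr_powr)
      finally show ?thesis .
    qed
    have rlt: "r < C * real m"
      using nlt2 rE C1 by (metis power_less_imp_less_base mult_nonneg_nonneg of_nat_0_le_iff order_trans zero_le_one)
    have r0: "r \<ge> 0" unfolding r_def by simp
    have "real n powr (1 + e) \<le> real n powr (1 + 1 / real E)" using n e by (intro powr_mono) auto
    also have "\<dots> = real n * r" unfolding r_def using npos by (simp add: powr_add)
    also have "\<dots> = r ^ (E + 1)" using rE by simp
    also have "\<dots> \<le> (C * real m) ^ (E + 1)" using rlt r0 by (intro power_mono) auto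
    also have "\<dots> = C ^ (E + 1) * real m ^ (E + 1)" by (simp add: power_mult_distrib)
    finally have a: "real n powr (1 + e) \<le> C ^ (E + 1) * real m ^ (E + 1)" .
    have "c * real n powr (1 + e) \<le> (c0 / C ^ (E + 1)) * (C ^ (E + 1) * real m ^ (E + 1))"
      using a cpos by (intro mult_mono) (auto simp: c_def)
    also have "\<dots> = c0 * real m ^ (E + 1)" using C1 by simp
    finally show ?thesis using cons[OF m(1)] m(2) Good_mono by blast
  qed
  then show ?thesis using cpos by blast
qed

lemma pad_grid:
  assumes T: "T \<subseteq> Sl R \<times> Bs M" and Y: "M \<le> Y" and cP: "m * Y \<le> n" and cT: "card T \<le> n"
    and gi: "girth_at_least (Gr m Y) (lin2 ` T) g" and I: "I \<le> real (m * card T)" and Y2: "M + R * m \<le> Y"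
  shows "Good g n I"
proof -
  have finT: "finite T" using T by (rule finite_subset) (simp add: fin_Sl fin_Bs)
  show ?thesis
  proof (rule padding[of "Gr m Y" "lin2 ` T" n "real Y"])
    show "finite (Gr m Y)" by (rule fin_Gr)
    show "finite (lin2 ` T)" using finT by simp
    show "card (Gr m Y) \<le> n" using cP card_Gr by simp
    show "card (lin2 ` T) \<le> n" using cT card_image_le[OF finT, of lin2] by linarith
    show "\<forall>p\<in>Gr m Y. snd p < real Y" unfolding Gr_def by auto
    show "\<forall>l\<in>lin2 ` T. \<forall>p\<in>l. fst p < 0 \<longrightarrow> snd p < real Y"
    proof (intro ballI impI)
      fix l p assume l: "l \<in> lin2 ` T" and p: "p \<in> l" "fst p < 0"
      then obtain a b where ab: "(a,b) \<in> T" "l = lin a b" by auto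
      then have a1: "a \<ge> 1" and b: "b < real M" using T unfolding Sl_def Bs_def by auto
      have "snd p = a * fst p + b" using p ab unfolding lin_def by auto
      moreover have "a * fst p < 0" using a1 p(2) by (simp add: mult_pos_neg)
      ultimately show "snd p < real Y" using b Y by linarith
    qed
    show "\<forall>l\<in>lin2 ` T. \<exists>p\<in>l. snd p < real Y"
    proof
      fix l assume l: "l \<in> lin2 ` T"
      then obtain a b where ab: "(a,b) \<in> T" "l = lin a b" by auto
      then have b: "b < real M" using T unfolding Bs_def by auto
      have "(0, b) \<in> l" using ab unfolding lin_def by simp
      then show "\<exists>p\<in>l. snd p < real Y" using b Y by (intro bexI[of _ "(0,b)"]) auto
    qed
    show "\<forall>l\<in>lin2 ` T. is_line l" using is_line_lin by auto
    show "girth_at_least (Gr m Y) (lin2 ` T) g" by (rule gi)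
    show "I \<le> real (card (incidences (Gr m Y) (lin2 ` T)))"
      using inc_lb[OF T Y2] I by (meson of_nat_le_iff order_trans)
  qed
qed

definition Bd :: "nat \<Rightarrow> nat \<Rightarrow> nat \<Rightarrow> nat \<Rightarrow> (real \<times> real) set set" where
  "Bd m R M j = (\<lambda>(x,a,b). (\<lambda>i. (a i, b i)) ` {..<j}) ` CP m R M j"

lemma Bd_card: "B \<in> Bd m R M j \<Longrightarrow> card B = j"
  unfolding Bd_def CP_def by (auto simp: card_image)

lemma Bd_sub: "B \<in> Bd m R M j \<Longrightarrow> B \<subseteq> Sl R \<times> Bs M"
  unfolding Bd_def CP_def by (auto simp: PiE_iff)

lemma Bd_fin: "finite (Bd m R M j)" unfolding Bd_def using fin_CP by simp

lemma Bd_cardle: "card (Bd m R M j) \<le> card (CP m R M j)"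
  unfolding Bd_def using fin_CP by (rule card_image_le)


lemma CP_term:
  fixes m R j :: nat
  assumes "j \<ge> 1" "R \<ge> 1"
  shows "real (m ^ j * R ^ (j - 1) * (R * m)) * (real m / real R) ^ j = real m ^ (2 * j + 1)"
proof -
  have RR: "real R ^ (j - 1) * real R = real R ^ j" using assms
    by (metis Suc_diff_1 less_le_trans zero_less_one power_Suc2)
  have "real (m ^ j * R ^ (j - 1) * (R * m)) * (real m / real R) ^ j
        = (real m ^ j * (real R ^ (j - 1) * real R) * real m) * (real m ^ j / real R ^ j)"
    by (simp add: power_divide algebra_simps)
  also have "\<dots> = real m ^ j * real m ^ j * real m" using RR assms by (simp add: field_simps)
  also have "\<dots> = real m ^ (2 * j + 1)" by (simp add: power_add mult_2)
  finally show ?thesis .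
qed

lemma cons_gen:
  fixes J m n :: nat
  assumes J: "J \<ge> 2" and m: "m \<ge> 1" and n: "n \<ge> 4 * J * m ^ (2 * J + 1)"
  shows "Good (2 * J + 2) n (real J * real m ^ (2 * J + 2))"
proof -
  define R where "R = 2 * J * m ^ (2 * J - 1)"
  define M where "M = R * m"
  define Y where "Y = M + R * m"
  define U where "U = Sl R \<times> Bs M"
  define t where "t = R * m ^ 2"
  define F where "F = (\<Union>j\<in>{2..J}. Bd m R M j)"
  have mpow: "m ^ (2 * J - 1) * m ^ 2 = m ^ (2 * J + 1)" using J by (simp flip: power_add)
  have R1: "R \<ge> 1" unfolding R_def using J m by simp
  have Rm: "m \<le> R"
  proof -
    have "m \<le> m ^ (2 * J - 1)" by (rule self_le_power) (use m J in auto)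
    also have "\<dots> \<le> R" unfolding R_def using J by simp
    finally show ?thesis .
  qed
  have finU: "finite U" unfolding U_def by (simp add: fin_Sl fin_Bs)
  have cU: "card U = R * M" unfolding U_def by (simp add: card_cartesian_product card_Sl card_Bs)
  have tle: "t \<le> card U" unfolding cU t_def M_def using Rm by (simp add: power2_eq_square)
  have FU: "F \<subseteq> Pow U" unfolding F_def U_def using Bd_sub by blast
  have Fne: "\<forall>B\<in>F. B \<noteq> {}" unfolding F_def using Bd_card J by fastforce
  obtain T where T: "T \<subseteq> U" "card T \<le> t" "real t - (\<Sum>B\<in>F. (real t / real (card U)) ^ card B) \<le> real (card T)"
    and av: "\<forall>B\<in>F. \<not> B \<subseteq> T"
    using deletion[OF finU tle FU Fne] by blast
  define q where "q = real t / real (card U)"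
  have q: "q = real m / real R" unfolding q_def t_def cU M_def using R1 m by (simp add: power2_eq_square)
  have W: "(\<Sum>B\<in>F. q ^ card B) \<le> real J * real m ^ (2 * J + 1)"
  proof -
    have "(\<Sum>B\<in>F. q ^ card B) = (\<Sum>j\<in>{2..J}. \<Sum>B\<in>Bd m R M j. q ^ card B)"
      unfolding F_def
    proof (rule sum.UNION_disjoint)
      show "finite {2..J}" by simp
      show "\<forall>i\<in>{2..J}. finite (Bd m R M i)" using Bd_fin by blast
      show "\<forall>i\<in>{2..J}. \<forall>j\<in>{2..J}. i \<noteq> j \<longrightarrow> Bd m R M i \<inter> Bd m R M j = {}"
        using Bd_card by blast
    qed
    also have "\<dots> \<le> (\<Sum>j\<in>{2..J}. real m ^ (2 * J + 1))"
    proof (rule sum_mono)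
      fix j assume j: "j \<in> {2..J}"
      have "(\<Sum>B\<in>Bd m R M j. q ^ card B) = real (card (Bd m R M j)) * q ^ j"
        using Bd_card by simp
      also have "\<dots> \<le> real (m ^ j * R ^ (j - 1) * M) * q ^ j"
      proof (rule mult_right_mono)
        show "real (card (Bd m R M j)) \<le> real (m ^ j * R ^ (j - 1) * M)"
          using Bd_cardle[of m R M j] card_CP[of j m R M] j of_nat_le_iff order_trans by (metis atLeastAtMost_iff)
        show "0 \<le> q ^ j" unfolding q by simp
      qed
      also have "\<dots> = real m ^ (2 * j + 1)" unfolding q M_def using CP_term[of j R m] j R1 by simp
      also have "\<dots> \<le> real m ^ (2 * J + 1)" using j m by (intro power_increasing) auto
      finally show "(\<Sum>B\<in>Bd m R M j. q ^ card B) \<le> real m ^ (2 * J + 1)" .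
    qed
    also have "\<dots> \<le> real J * real m ^ (2 * J + 1)"
    proof -
      have "(\<Sum>j\<in>{2..J}. real m ^ (2 * J + 1)) = real (J - 1) * real m ^ (2 * J + 1)" using J by simp
      also have "\<dots> \<le> real J * real m ^ (2 * J + 1)" by (intro mult_right_mono) auto
      finally show ?thesis .
    qed
    finally show ?thesis .
  qed
  have tval: "real t = 2 * real J * real m ^ (2 * J + 1)"
    unfolding t_def R_def using mpow by (metis of_nat_mult of_nat_numeral of_nat_power mult.assoc)
  have cT: "real J * real m ^ (2 * J + 1) \<le> real (card T)" using T(3) W tval unfolding q_def by linarith
  have TU: "T \<subseteq> Sl R \<times> Bs M" using T U_def by simp
  have Ypts: "m * Y = 4 * J * m ^ (2 * J + 1)"
    unfolding Y_def M_def R_def using mpow by (simp add: algebra_simps power2_eq_square)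
  have gi: "girth_at_least (Gr m Y) (lin2 ` T) (2 * J + 2)"
    unfolding girth_at_least_def
  proof (intro allI impI)
    fix mm assume "incidence_cycle (Gr m Y) (lin2 ` T) mm"
    then obtain j ps ls where cy: "mm = 2 * j" "j \<ge> 2" "inj_on ps {..<j}" "inj_on ls {..<j}"
      "\<forall>i<j. ps i \<in> Gr m Y \<and> ls i \<in> lin2 ` T \<and> ps i \<in> ls i \<and> ps ((i + 1) mod j) \<in> ls i"
      unfolding incidence_cycle_def by (elim exE conjE) (rule that, assumption+)
    show "2 * J + 2 \<le> mm"
    proof (rule ccontr)
      assume "\<not> 2 * J + 2 \<le> mm"
      then have jJ: "j \<le> J" using cy by simp
      obtain x a b where xab: "(x,a,b) \<in> CP m R M j" "(\<lambda>i. (a i, b i)) ` {..<j} \<subseteq> T"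
        using cycle_params[OF TU cy(2) cy(3) cy(4) cy(5)] by blast
      have "(\<lambda>i. (a i, b i)) ` {..<j} \<in> Bd m R M j" unfolding Bd_def using xab(1) by force
      then have "(\<lambda>i. (a i, b i)) ` {..<j} \<in> F" unfolding F_def using jJ cy(2) by auto
      then show False using av xab(2) by blast
    qed
  qed
  have "card T \<le> n"
  proof -
    have tn: "t = 2 * J * m ^ (2 * J + 1)" unfolding t_def R_def using mpow by (simp add: mult.assoc)
    have "2 * J * m ^ (2 * J + 1) \<le> 4 * J * m ^ (2 * J + 1)" by simp
    then have "t \<le> n" using n tn by linarith
    then show ?thesis using T(2) by simp
  qed
  moreover have "real J * real m ^ (2 * J + 2) \<le> real (m * card T)"
  proof -
    have "real J * real m ^ (2 * J + 2) = real m * (real J * real m ^ (2 * J + 1))" by (simp add: algebra_simps)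
    also have "\<dots> \<le> real m * real (card T)" using cT by (intro mult_left_mono) auto
    finally show ?thesis by simp
  qed
  ultimately show ?thesis
    using pad_grid[OF TU _ _ _ gi, of n] Ypts n unfolding Y_def by simp
qed

lemma CP_facts:
  assumes "(x,a,b) \<in> CP m R M j" "i < j"
  shows "x i \<noteq> x ((i + 1) mod j)"
    "a i * x ((i + 1) mod j) + b i = a ((i + 1) mod j) * x ((i + 1) mod j) + b ((i + 1) mod j)"
  using assms unfolding CP_def by auto

lemma CP_inj_pairs:
  assumes "(x,a,b) \<in> CP m R M j" "i < j" "i' < j" "a i = a i'" "b i = b i'"
  shows "i = i'"
proof -
  have "inj_on (\<lambda>i. (a i, b i)) {..<j}" using assms(1) unfolding CP_def by auto
  then show ?thesis using assms by (auto dest: inj_onD)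
qed

lemma CP2_empty: "(x,a,b) \<in> CP m R M 2 \<Longrightarrow> False"
proof -
  assume A: "(x,a,b) \<in> CP m R M 2"
  have e0: "a 0 * x 1 + b 0 = a 1 * x 1 + b 1" and ne: "x 0 \<noteq> x 1" using CP_facts[OF A, of 0] by auto
  have e1: "a 1 * x 0 + b 1 = a 0 * x 0 + b 0" using CP_facts[OF A, of 1] by (auto simp: numeral_2_eq_2)
  have "(a 0 - a 1) * (x 1 - x 0) = 0" using e0 e1 by (simp add: algebra_simps)
  then have "a 0 = a 1" using ne by simp
  then have "b 0 = b 1" using e0 by simp
  then show False using CP_inj_pairs[OF A, of 0 1] \<open>a 0 = a 1\<close> by simp
qed

definition Dd :: "nat \<Rightarrow> real set" where "Dd m = real_of_int ` {-(int m - 1)..int m - 1}"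

definition gtri :: "real \<times> real \<times> real \<times> real \<Rightarrow> real set" where
  "gtri = (\<lambda>(a1,a2,d0,d1). {(a2 * (d0 + d1) - a1 * d1) / d0, a1, a2})"

definition F3 :: "nat \<Rightarrow> nat \<Rightarrow> real set set" where
  "F3 m R = {B \<in> gtri ` (Sl R \<times> Sl R \<times> Dd m \<times> Dd m). B \<subseteq> Sl R \<and> card B = 3}"

lemma card_Dd: "card (Dd m) \<le> 2 * m"
proof -
  have "card (Dd m) \<le> card {-(int m - 1)..int m - 1}" unfolding Dd_def by (rule card_image_le) simp
  also have "\<dots> \<le> 2 * m" by simp
  finally show ?thesis .
qed

lemma diff_Dd: assumes "x \<in> Xs m" "y \<in> Xs m" shows "y - x \<in> Dd m"
proof -
  obtain u v where u: "x = real u" "u < m" and v: "y = real v" "v < m" using assms unfolding Xs_def by auto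
  have "y - x = real_of_int (int v - int u)" using u v by simp
  moreover have "int v - int u \<in> {-(int m - 1)..int m - 1}" using u v by auto
  ultimately show ?thesis unfolding Dd_def by blast
qed

lemma CP3_bad:
  assumes A: "(x,a,b) \<in> CP m R M 3"
  shows "{a 0, a 1, a 2} \<in> F3 m R"
proof -
  have e0: "a 0 * x 1 + b 0 = a 1 * x 1 + b 1" and n0: "x 0 \<noteq> x 1" using CP_facts[OF A, of 0] by auto
  have e1: "a 1 * x 2 + b 1 = a 2 * x 2 + b 2" and n1: "x 1 \<noteq> x 2" using CP_facts[OF A, of 1] by (auto simp: numeral_2_eq_2)
  have e2: "a 2 * x 0 + b 2 = a 0 * x 0 + b 0" using CP_facts[OF A, of 2] by (auto simp: numeral_2_eq_2)
  have a01: "a 0 \<noteq> a 1"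
  proof
    assume h: "a 0 = a 1" then have "b 0 = b 1" using e0 by simp
    then show False using CP_inj_pairs[OF A, of 0 1] h by simp
  qed
  have a12: "a 1 \<noteq> a 2"
  proof
    assume h: "a 1 = a 2" then have "b 1 = b 2" using e1 by simp
    then show False using CP_inj_pairs[OF A, of 1 2] h by simp
  qed
  have a20: "a 2 \<noteq> a 0"
  proof
    assume h: "a 2 = a 0" then have "b 2 = b 0" using e2 by simp
    then show False using CP_inj_pairs[OF A, of 2 0] h by simp
  qed
  have card3: "card {a 0, a 1, a 2} = 3" using a01 a12 a20 by auto
  have ain: "a i \<in> Sl R" "x i \<in> Xs m" if "i < 3" for i using A that unfolding CP_def by (auto simp: PiE_iff)
  have sub: "{a 0, a 1, a 2} \<subseteq> Sl R" using ain by auto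
  define d0 where "d0 = x 1 - x 0"
  define d1 where "d1 = x 2 - x 1"
  have d0nz: "d0 \<noteq> 0" using n0 unfolding d0_def by simp
  have clos: "a 0 * d0 = a 2 * (d0 + d1) - a 1 * d1"
    unfolding d0_def d1_def using e0 e1 e2 by (simp add: algebra_simps)
  have a0: "(a 2 * (d0 + d1) - a 1 * d1) / d0 = a 0" using clos d0nz by (simp add: field_simps)
  have D: "(a 1, a 2, d0, d1) \<in> Sl R \<times> Sl R \<times> Dd m \<times> Dd m"
    using ain diff_Dd unfolding d0_def d1_def by auto
  have "gtri (a 1, a 2, d0, d1) = {a 0, a 1, a 2}" unfolding gtri_def using a0 by simp
  then have "{a 0, a 1, a 2} \<in> gtri ` (Sl R \<times> Sl R \<times> Dd m \<times> Dd m)" using D by force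
  then show ?thesis unfolding F3_def using sub card3 by simp
qed


lemma cons3:
  fixes m n :: nat
  assumes m: "m \<ge> 1" and n: "n \<ge> 64 * m ^ 6"
  shows "Good 8 n (32 * real m ^ 7)"
proof -
  define R where "R = 32 * m ^ 4"
  define M where "M = R * m"
  define Y where "Y = M + R * m"
  define t where "t = 2 * m"
  define D where "D = Sl R \<times> Sl R \<times> Dd m \<times> Dd m"
  have R1: "R \<ge> 1" unfolding R_def using m by simp
  have finU: "finite (Sl R)" by (rule fin_Sl)
  have tle: "t \<le> card (Sl R)"
  proof -
    have "m \<le> m ^ 4" by (rule self_le_power) (use m in auto)
    then show ?thesis unfolding t_def card_Sl R_def by simp
  qed
  have FU: "F3 m R \<subseteq> Pow (Sl R)" unfolding F3_def by auto
  have Fne: "\<forall>B\<in>F3 m R. B \<noteq> {}" unfolding F3_def by auto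
  obtain A where A: "A \<subseteq> Sl R" "card A \<le> t" "real t - (\<Sum>B\<in>F3 m R. (real t / real (card (Sl R))) ^ card B) \<le> real (card A)"
    and av: "\<forall>B\<in>F3 m R. \<not> B \<subseteq> A"
    using deletion[OF finU tle FU Fne] by blast
  define q where "q = real t / real (card (Sl R))"
  have q: "q = 2 * real m / real R" unfolding q_def t_def card_Sl by simp
  have finD: "finite D" unfolding D_def Dd_def by (simp add: fin_Sl)
  have cD: "card D \<le> R * R * (2 * m) * (2 * m)"
  proof -
    have "card D = R * R * card (Dd m) * card (Dd m)" unfolding D_def by (simp add: card_cartesian_product card_Sl)
    also have "\<dots> \<le> R * R * (2 * m) * (2 * m)" using card_Dd[of m] by (intro mult_mono) auto
    finally show ?thesis .
  qed
  have p5: "real m * (real m * (real m * (real m * real m))) = real m ^ 5"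
    by (simp add: power_Suc numeral_eq_Suc del: One_nat_def)
  have p54: "real m * real m ^ 4 = real m ^ 5" by (subst power_Suc[symmetric]) simp
  have q3: "real (R * R * (2 * m) * (2 * m)) * q ^ 3 = real m"
  proof -
    have "real (R * R * (2 * m) * (2 * m)) * q ^ 3 = 32 * real m ^ 5 / real R" unfolding q using R1 p5
      by (simp add: power3_eq_cube field_simps)
    also have "\<dots> = real m" unfolding R_def using m p54 by (simp add: field_simps)
    finally show ?thesis .
  qed
  have W: "(\<Sum>B\<in>F3 m R. q ^ card B) \<le> real m"
  proof -
    have finF: "finite (F3 m R)" unfolding F3_def using finD D_def by simp
    have "(\<Sum>B\<in>F3 m R. q ^ card B) = real (card (F3 m R)) * q ^ 3" unfolding F3_def by simp
    also have "\<dots> \<le> real (card D) * q ^ 3"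
    proof (rule mult_right_mono)
      have "card (F3 m R) \<le> card (gtri ` D)" unfolding F3_def D_def
        by (rule card_mono) (use finD D_def in auto)
      also have "\<dots> \<le> card D" using finD by (rule card_image_le)
      finally show "real (card (F3 m R)) \<le> real (card D)" by simp
      show "0 \<le> q ^ 3" unfolding q by simp
    qed
    also have "\<dots> \<le> real (R * R * (2 * m) * (2 * m)) * q ^ 3"
    proof (rule mult_right_mono)
      show "real (card D) \<le> real (R * R * (2 * m) * (2 * m))" using cD of_nat_le_iff by blast
      show "0 \<le> q ^ 3" unfolding q by simp
    qed
    also have "\<dots> = real m" by (rule q3)
    finally show ?thesis .
  qed
  have cA: "real m \<le> real (card A)" using A(3) W unfolding q_def t_def by simp
  define T where "T = A \<times> Bs M"
  have TU: "T \<subseteq> Sl R \<times> Bs M" unfolding T_def using A by auto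
  have finA: "finite A" using A finU finite_subset by blast
  have cT: "card T = card A * M" unfolding T_def by (simp add: card_cartesian_product card_Bs)
  have gi: "girth_at_least (Gr m Y) (lin2 ` T) 8"
    unfolding girth_at_least_def
  proof (intro allI impI)
    fix mm assume "incidence_cycle (Gr m Y) (lin2 ` T) mm"
    then obtain j ps ls where cy: "mm = 2 * j" "j \<ge> 2" "inj_on ps {..<j}" "inj_on ls {..<j}"
      "\<forall>i<j. ps i \<in> Gr m Y \<and> ls i \<in> lin2 ` T \<and> ps i \<in> ls i \<and> ps ((i + 1) mod j) \<in> ls i"
      unfolding incidence_cycle_def by (elim exE conjE) (rule that, assumption+)
    show "8 \<le> mm"
    proof (rule ccontr)
      assume "\<not> 8 \<le> mm"
      then have jJ: "j = 2 \<or> j = 3" using cy by auto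
      obtain x a b where xab: "(x,a,b) \<in> CP m R M j" "(\<lambda>i. (a i, b i)) ` {..<j} \<subseteq> T"
        using cycle_params[OF TU cy(2) cy(3) cy(4) cy(5)] by blast
      show False
      proof (cases "j = 2")
        case True then show False using CP2_empty xab(1) by blast
      next
        case False
        then have j3: "j = 3" using jJ by simp
        have "{a 0, a 1, a 2} \<in> F3 m R" using CP3_bad xab(1) j3 by simp
        moreover have "{a 0, a 1, a 2} \<subseteq> A"
        proof -
          have "(a i, b i) \<in> A \<times> Bs M" if "i < 3" for i using xab(2) j3 that unfolding T_def by auto
          then have "a i \<in> A" if "i < 3" for i using that by blast
          then show ?thesis by auto
        qed
        ultimately show False using av by blast
      qed
    qed
  qed
  have n6: "m * (m * m ^ 4) = m ^ 6" by (simp only: power_Suc[symmetric]) simp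
  have r7: "real m * (real m * (real m * real m ^ 4)) = real m ^ 7" by (simp only: power_Suc[symmetric]) simp
  have Ypts: "m * Y = 64 * m ^ 6" unfolding Y_def M_def R_def using n6 by (simp add: algebra_simps)
  have "card T \<le> n"
  proof -
    have "card T \<le> t * M" unfolding cT using A(2) by simp
    also have "t * M = 64 * m ^ 6" unfolding t_def M_def R_def using n6 by (simp add: algebra_simps)
    finally show ?thesis using n by simp
  qed
  moreover have "32 * real m ^ 7 \<le> real (m * card T)"
  proof -
    have "32 * real m ^ 7 = real m * real m * real M" unfolding M_def R_def using r7 by (simp add: algebra_simps)
    also have "\<dots> \<le> real m * real (card A) * real M" using cA by (intro mult_right_mono mult_left_mono) auto
    finally show ?thesis unfolding cT by (simp add: mult.assoc)
  qed
  ultimately show ?thesis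
    using pad_grid[OF TU _ _ _ gi, of n] Ypts n unfolding Y_def by simp
qed

theorem theorem1p2:
  fixes k :: nat
  assumes "odd k" and "k \<ge> 3"
  shows "\<exists>c > 0. \<forall>n :: nat. n > 1 \<longrightarrow>
           (\<exists>P L. card P = n \<and> card L = n \<and> (\<forall>l\<in>L. is_line l) \<and>
              girth_at_least P L (k + 5) \<and>
              real (card (incidences P L)) \<ge>
                c * real n powr (1 + 4 / (real k ^ 2 + 6 * real k - 3)))"
proof -
  define e where "e = 4 / (real k ^ 2 + 6 * real k - 3)"
  have kk: "real k ^ 2 + 6 * real k - 3 > 0" using assms(2)
  proof -
    have "real k \<ge> 3" using assms(2) by simp
    then have "real k ^ 2 \<ge> 0" by simp
    then show ?thesis using \<open>real k \<ge> 3\<close> by linarith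
  qed
  have e0: "0 \<le> e" unfolding e_def using kk by simp
  have "\<exists>c>0. \<forall>n::nat. n > 1 \<longrightarrow> Good (k + 5) n (c * real n powr (1 + e))"
  proof (cases "k = 3")
    case True
    have e6: "e \<le> 1 / real (6::nat)" unfolding e_def True by simp
    show ?thesis
      using final[of 64 6 32 e "k + 5", OF _ _ _ e0 e6] cons3 True by auto
  next
    case False
    have k4: "k \<noteq> 4" using assms(1) by auto
    then have k5: "k \<ge> 5" using assms(2) False by linarith
    define J where "J = (k + 3) div 2"
    obtain r where r: "k = 2 * r + 1" using assms(1) oddE by blast
    have J2: "2 * J = k + 3" unfolding J_def r by simp
    have Jge: "J \<ge> 2" using J2 k5 by linarith
    have g: "k + 5 = 2 * J + 2" using J2 by simp
    have eE: "e \<le> 1 / real (2 * J + 1)"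
    proof -
      have E: "real (2 * J + 1) = real k + 4" using J2 by simp
      have "4 * (real k + 4) \<le> real k ^ 2 + 6 * real k - 3"
      proof -
        have "real k \<ge> 5" using k5 by simp
        then have "real k * real k \<ge> 5 * real k" by (simp add: mult_right_mono)
        then show ?thesis using \<open>real k \<ge> 5\<close> unfolding power2_eq_square by (smt (verit))
      qed
      then show ?thesis unfolding e_def E using kk by (simp add: divide_simps)
    qed
    have cons: "\<And>m n. m \<ge> 1 \<Longrightarrow> n \<ge> (4 * J) * m ^ (2 * J + 1) \<Longrightarrow> Good (k + 5) n (real J * real m ^ (2 * J + 1 + 1))"
    proof -
      fix m n :: nat assume a: "m \<ge> 1" "n \<ge> (4 * J) * m ^ (2 * J + 1)"
      have "Good (2 * J + 2) n (real J * real m ^ (2 * J + 2))" using cons_gen[OF Jge a(1)] a(2) by (simp add: mult.assoc)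
      then show "Good (k + 5) n (real J * real m ^ (2 * J + 1 + 1))" unfolding g by (simp add: numeral_2_eq_2)
    qed
    have "\<exists>c>0. \<forall>n::nat. n > 1 \<longrightarrow> Good (k + 5) n (c * real n powr (1 + e))"
      by (rule final[of "4 * J" "2 * J + 1" "real J" e, OF _ _ _ e0 eE]) (use Jge cons in auto)
    then show ?thesis .
  qed
  then show ?thesis unfolding Good_def e_def by blast
qed

end
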